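(* For any distributions (subpopulations) $\mathcal{D}_1,\dots,\mathcal{D}_K$ on $\mathcal{Z}$, any loss $\ell$, any $N\ge1$ and any learning algorithm $\mathcal{A}:\mathcal{Z}^N\to\mathcal{H}$, either the Conservation Condition holds, i.e. $$(f_1({\bm{p}}),\dots,f_K({\bm{p}}))=\nabla L^{\mathrm{same}}({\bm{p}})\quad\text{for all }{\bm{p}}\in\mathbb{R}^K_{\ge0}\setminus\{\mathbf{0}\},$$ or there exists a set $U\subseteq\Delta_K$ of (Lebesgue, on the simplex) measure zero such that for all ${\bm{p}}\in\Delta_K\setminus U$, $$L^*_N({\bm{p}})<L^{\mathrm{same}}({\bm{p}}).$$
   Context: Let $\ell(h,{\bm{z}})$ be a loss on models $h\in\mathcal{H}$ and instances ${\bm{z}}\in\mathcal{Z}$, with all expectations below finite. $\Delta_K=\{{\bm{r}}\in\mathbb{R}^K:{\bm{r}}\ge0,\ \sum_kr_k=1\}$, and $\mathcal{D}_{\bm{q}}=\sum_kq_k\mathcal{D}_k$ for ${\bm{q}}\in\Delta_K$. For ${\bm{q}}\in\Delta_K$ let $\bar e_k({\bm{q}})=\mathbb{E}_{S\sim\mathcal{D}_{\bm{q}}^N}\,\mathbb{E}_{{\bm{z}}\sim\mathcal{D}_k}[\ell(\mathcal{A}(S),{\bm{z}})]$ and $L_N({\bm{p}},{\bm{q}})=\sum_k p_k\bar e_k({\bm{q}})$; $L^*_N({\bm{p}})=\min_{{\bm{q}}\in\Delta_K}L_N({\bm{p}},{\bm{q}})$. Extend to nonzero nonnegative vectors: $f_k({\bm{p}})=\bar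 e_k({\bm{p}}/|{\bm{p}}|)$ with $|{\bm{p}}|=\sum_kp_k$, and $L^{\mathrm{same}}({\bm{p}})=\sum_kp_kf_k({\bm{p}})$ for ${\bm{p}}\in\mathbb{R}^K_{\ge0}\setminus\{\mathbf{0}\}$ (so $L^{\mathrm{same}}({\bm{p}})=L_N({\bm{p}},{\bm{p}})$ on $\Delta_K$). *)

theory Defs
  imports "HOL-Probability.Probability"
begin



text \<open>Probability simplex Delta_K, with the index set {1..K} modelled by a finite type 'k.\<close>
definition prob_simplex :: "(real^('k::finite)) set" where
  "prob_simplex = {r. (\<forall>k. 0 \<le> r $ k) \<and> (\<Sum>k\<in>UNIV. r $ k) = 1}"

definition orthant0 :: "(real^('k::finite)) set" where
  "orthant0 = {p. (\<forall>k. 0 \<le> p $ k)} - {0}"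

definition vsum :: "real^('k::finite) \<Rightarrow> real" where
  "vsum p = (\<Sum>k\<in>UNIV. p $ k)"

definition mixture :: "'z measure \<Rightarrow> ('k::finite \<Rightarrow> 'z measure) \<Rightarrow> real^'k \<Rightarrow> 'z measure" where
  "mixture M D q = measure_of (space M) (sets M)
      (\<lambda>A. \<Sum>k\<in>UNIV. ennreal (q $ k) * emeasure (D k) A)"

definition sample_measure :: "nat \<Rightarrow> 'z measure \<Rightarrow> (nat \<Rightarrow> 'z) measure" where
  "sample_measure N P = PiM {..<N} (\<lambda>_. P)"

definition ebar ::
  "'z measure \<Rightarrow> ('k::finite \<Rightarrow> 'z measure) \<Rightarrow> ('h \<Rightarrow> 'z \<Rightarrow> real) \<Rightarrow> nat
    \<Rightarrow> ((nat \<Rightarrow> 'z) \<Rightarrow> 'h) \<Rightarrow> 'k \<Rightarrow> real^'k \<Rightarrow> real" where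
  "ebar M D loss N Alg k q =
     (\<integral>S. (\<integral>z. loss (Alg S) z \<partial>(D k)) \<partial>(sample_measure N (mixture M D q)))"

definition LN where
  "LN M D loss N Alg p q = (\<Sum>k\<in>UNIV. p $ k * ebar M D loss N Alg k q)"

text \<open>L*_N(p) = min over q in the simplex of L_N(p,q) (taken as an infimum).\<close>
definition Lstar where
  "Lstar M D loss N Alg p = (INF q\<in>prob_simplex. LN M D loss N Alg p q)"

definition fk where
  "fk M D loss N Alg k p = ebar M D loss N Alg k (p /\<^sub>R vsum p)"

definition Lsame where
  "Lsame M D loss N Alg p = (\<Sum>k\<in>UNIV. p $ k * fk M D loss N Alg k p)"

text \<open>U (a subset of the simplex) has (K-1)-dimensional Lebesgue measure zero on the simplex:
  its image under dropping any one coordinate is a Lebesgue null set of R^(K-1).\<close>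
definition simplex_null :: "(real^('k::finite)) set \<Rightarrow> bool" where
  "simplex_null U \<longleftrightarrow>
     (\<forall>k0. (\<lambda>p. restrict (\<lambda>i. p $ i) (UNIV - {k0})) ` U
              \<in> null_sets (PiM (UNIV - {k0}) (\<lambda>_. lborel)))"

end

theory Submission
  imports Defs
begin

inductive polyfun :: "'i set \<Rightarrow> (('i \<Rightarrow> real) \<Rightarrow> real) \<Rightarrow> bool" for I where
  pf_const: "polyfun I (\<lambda>x. c)"
| pf_var: "i \<in> I \<Longrightarrow> polyfun I (\<lambda>x. x i)"
| pf_add: "polyfun I f \<Longrightarrow> polyfun I g \<Longrightarrow> polyfun I (\<lambda>x. f x + g x)"
| pf_mult: "polyfun I f \<Longrightarrow> polyfun I g \<Longrightarrow> polyfun I (\<lambda>x. f x * g x)"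

lemma polyfun_sum: "finite S \<Longrightarrow> (\<And>s. s \<in> S \<Longrightarrow> polyfun I (f s)) \<Longrightarrow> polyfun I (\<lambda>x. \<Sum>s\<in>S. f s x)"
  by (induction S rule: finite_induct) (auto intro: polyfun.intros)

lemma polyfun_prod: "finite S \<Longrightarrow> (\<And>s. s \<in> S \<Longrightarrow> polyfun I (f s)) \<Longrightarrow> polyfun I (\<lambda>x. \<Prod>s\<in>S. f s x)"
  by (induction S rule: finite_induct) (auto intro: polyfun.intros)

lemma polyfun_diff: "polyfun I f \<Longrightarrow> polyfun I g \<Longrightarrow> polyfun I (\<lambda>x. f x - g x)"
proof -
  assume "polyfun I f" "polyfun I g"
  have e: "(\<lambda>x. f x - g x) = (\<lambda>x. f x + (-1) * g x)" by (rule ext) simp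
  show ?thesis unfolding e by (rule pf_add, fact, rule pf_mult, rule pf_const, fact)
qed

lemma polyfun_power: "polyfun I f \<Longrightarrow> polyfun I (\<lambda>x. f x ^ n)"
  by (induction n) (auto intro: polyfun.intros)

lemma polyfun_local: "polyfun I f \<Longrightarrow> (\<And>i. i \<in> I \<Longrightarrow> x i = y i) \<Longrightarrow> f x = f y"
  by (induction rule: polyfun.induct) auto

lemma polyfun_measurable: "polyfun I f \<Longrightarrow> f \<in> borel_measurable (PiM I (\<lambda>_. lborel))"
proof (induction rule: polyfun.induct)
  case (pf_var i)
  then have "(\<lambda>x. x i) \<in> measurable (PiM I (\<lambda>_. lborel)) lborel"
    by (rule measurable_component_singleton)
  then show ?case by (simp add: measurable_lborel1)
qed auto

lemma polyfun_dec:
  assumes "polyfun (insert i I) f"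
  shows "\<exists>d c. (\<forall>n. polyfun I (c n)) \<and> (\<forall>x. f x = (\<Sum>n\<le>d. c n x * x i ^ n))"
  using assms
proof (induction rule: polyfun.induct)
  case (pf_const a)
  show ?case
    by (rule exI[of _ 0], rule exI[of _ "\<lambda>_ _. a"]) (auto intro: polyfun.intros)
next
  case (pf_var j)
  show ?case
  proof (cases "j = i")
    case True
    show ?thesis
      by (rule exI[of _ 1], rule exI[of _ "\<lambda>n _. if n = 1 then 1 else 0"]) (auto intro: polyfun.intros simp: True)
  next
    case False
    then have "j \<in> I" using pf_var by auto
    show ?thesis
      by (rule exI[of _ 0], rule exI[of _ "\<lambda>n x. x j"]) (auto intro: polyfun.intros \<open>j \<in> I\<close>)
  qed
next
  case (pf_add f g)
  then obtain d1 c1 d2 c2 where h1: "\<forall>n. polyfun I (c1 n)" "\<forall>x. f x = (\<Sum>n\<le>d1. c1 n x * x i ^ n)"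
    and h2: "\<forall>n. polyfun I (c2 n)" "\<forall>x. g x = (\<Sum>n\<le>d2. c2 n x * x i ^ n)" by blast
  define d where "d = max d1 d2"
  define c where "c n x = (if n \<le> d1 then c1 n x else 0) + (if n \<le> d2 then c2 n x else 0)" for n x
  have "polyfun I (c n)" for n
    unfolding c_def using h1 h2 by (cases "n \<le> d1"; cases "n \<le> d2") (auto intro: polyfun.intros)
  moreover have "f x + g x = (\<Sum>n\<le>d. c n x * x i ^ n)" for x
  proof -
    have "(\<Sum>n\<le>d. c n x * x i ^ n) = (\<Sum>n\<le>d. (if n \<le> d1 then c1 n x * x i ^ n else 0)) + (\<Sum>n\<le>d. (if n \<le> d2 then c2 n x * x i ^ n else 0))"
      unfolding sum.distrib[symmetric] by (rule sum.cong) (auto simp: c_def distrib_right)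
    also have "(\<Sum>n\<le>d. (if n \<le> d1 then c1 n x * x i ^ n else 0)) = (\<Sum>n\<in>{..d} \<inter> {n. n \<le> d1}. c1 n x * x i ^ n)"
      by (simp add: sum.inter_restrict)
    also have "{..d} \<inter> {n. n \<le> d1} = {..d1}" by (auto simp: d_def)
    also have "(\<Sum>n\<le>d. (if n \<le> d2 then c2 n x * x i ^ n else 0)) = (\<Sum>n\<in>{..d} \<inter> {n. n \<le> d2}. c2 n x * x i ^ n)"
      by (simp add: sum.inter_restrict)
    also have "{..d} \<inter> {n. n \<le> d2} = {..d2}" by (auto simp: d_def)
    finally show ?thesis using h1 h2 by simp
  qed
  ultimately show ?case by blast
next
  case (pf_mult f g)
  then obtain d1 c1 d2 c2 where h1: "\<forall>n. polyfun I (c1 n)" "\<forall>x. f x = (\<Sum>n\<le>d1. c1 n x * x i ^ n)"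
    and h2: "\<forall>n. polyfun I (c2 n)" "\<forall>x. g x = (\<Sum>n\<le>d2. c2 n x * x i ^ n)" by blast
  define c where "c r x = (\<Sum>n\<le>d1. \<Sum>m\<le>d2. if n + m = r then c1 n x * c2 m x else 0)" for r x
  have "polyfun I (c r)" for r
    unfolding c_def
  proof (intro polyfun_sum)
    fix n m show "polyfun I (\<lambda>x. if n + m = r then c1 n x * c2 m x else 0)"
      using h1 h2 by (cases "n + m = r") (auto intro: polyfun.intros)
  qed auto
  moreover have "f x * g x = (\<Sum>r\<le>d1+d2. c r x * x i ^ r)" for x
  proof -
    have "(\<Sum>r\<le>d1+d2. c r x * x i ^ r) = (\<Sum>r\<le>d1+d2. \<Sum>n\<le>d1. \<Sum>m\<le>d2. if n + m = r then c1 n x * c2 m x * x i ^ (n+m) else 0)"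
      unfolding c_def sum_distrib_right by (intro sum.cong refl) auto
    also have "\<dots> = (\<Sum>n\<le>d1. \<Sum>m\<le>d2. \<Sum>r\<le>d1+d2. if n + m = r then c1 n x * c2 m x * x i ^ (n+m) else 0)"
      by (subst sum.swap) (simp add: sum.swap[of _ "{..d2}"])
    also have "\<dots> = (\<Sum>n\<le>d1. \<Sum>m\<le>d2. c1 n x * c2 m x * x i ^ (n+m))"
      by (intro sum.cong refl) (simp add: sum.delta)
    also have "\<dots> = f x * g x"
      using h1 h2 by (simp add: sum_product power_add algebra_simps)
    finally show ?thesis by simp
  qed
  ultimately show ?case by blast
qed

lemma psf_lborel: "product_sigma_finite (\<lambda>_::'i. lborel :: real measure)"
  by (simp add: product_sigma_finite_def lborel.sigma_finite_measure_axioms)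

lemma polyfun_null:
  assumes "finite I" "polyfun I f" "f x0 \<noteq> 0"
  shows "{x \<in> space (PiM I (\<lambda>_::'i. lborel :: real measure)). f x = 0} \<in> null_sets (PiM I (\<lambda>_::'i. lborel :: real measure))"
  using assms
proof (induction I arbitrary: f x0 rule: finite_induct)
  case empty
  have E: "{x \<in> space (PiM {} (\<lambda>_::'i. lborel :: real measure)). f x = 0} = {}"
  proof -
    have "\<And>x. f x = f x0" using polyfun_local[OF empty(1), of _ x0] by blast
    then have nz: "\<And>x. f x \<noteq> 0" using empty(2) by metis
    show ?thesis by (simp add: nz)
  qed
  show ?case by (subst E) simp
next
  case (insert i I)
  interpret P: product_sigma_finite "\<lambda>_::'i. lborel :: real measure" by (rule psf_lborel)
  obtain d c where dc: "\<And>n. polyfun I (c n)" "\<And>x. f x = (\<Sum>n\<le>d. c n x * x i ^ n)"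
    using polyfun_dec[OF insert(4)] by blast
  have "\<exists>n\<le>d. c n x0 \<noteq> 0"
  proof (rule ccontr)
    assume "\<not> ?thesis" then have "\<forall>n\<le>d. c n x0 = 0" by auto
    then have "f x0 = 0" using dc(2)[of x0] by simp
    with insert(5) show False by simp
  qed
  then obtain n0 where n0: "n0 \<le> d" "c n0 x0 \<noteq> 0" by blast
  have Z0: "{x \<in> space (PiM I (\<lambda>_::'i. lborel :: real measure)). c n0 x = 0} \<in> null_sets (PiM I (\<lambda>_::'i. lborel :: real measure))"
    by (rule insert(3)[OF dc(1) n0(2)])
  have IJ: "I \<inter> {i} = {}" using insert(2) by simp
  have fi: "finite {i}" by simp
  let ?Z = "{x \<in> space (PiM (insert i I) (\<lambda>_::'i. lborel :: real measure)). f x = 0}"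
  have Zs: "?Z \<in> sets (PiM (I \<union> {i}) (\<lambda>_::'i. lborel :: real measure))"
    using polyfun_measurable[OF insert(4)] by (simp add: pred_def[symmetric])
  note fold = P.emeasure_fold_integral[OF IJ insert(1) fi Zs]
  have "emeasure (PiM (I \<union> {i}) (\<lambda>_::'i. lborel :: real measure)) ?Z =
     (\<integral>\<^sup>+x. emeasure (PiM {i} (\<lambda>_::'i. lborel :: real measure)) ((\<lambda>y. merge I {i} (x, y)) -` ?Z \<inter> space (PiM {i} (\<lambda>_::'i. lborel :: real measure))) \<partial>PiM I (\<lambda>_::'i. lborel :: real measure))"
    by (rule fold)
  also have "\<dots> = (\<integral>\<^sup>+x. 0 \<partial>PiM I (\<lambda>_::'i. lborel :: real measure))"
  proof (rule nn_integral_cong_AE)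
    have "AE x in PiM I (\<lambda>_::'i. lborel :: real measure). x \<notin> {x \<in> space (PiM I (\<lambda>_::'i. lborel :: real measure)). c n0 x = 0}"
      by (rule AE_not_in[OF Z0])
    then show "AE x in PiM I (\<lambda>_::'i. lborel :: real measure). emeasure (PiM {i} (\<lambda>_::'i. lborel :: real measure)) ((\<lambda>y. merge I {i} (x, y)) -` ?Z \<inter> space (PiM {i} (\<lambda>_::'i. lborel :: real measure))) = 0"
      using AE_space
    proof eventually_elim
      case (elim x)
      then have cx: "c n0 x \<noteq> 0" by blast
      define R where "R = {t. (\<Sum>n\<le>d. c n x * t ^ n) = 0}"
      have Rfin: "finite R" unfolding R_def by (rule polyfun_roots_finite[where c="\<lambda>n. c n x", OF cx n0(1)])
      define B where "B = (\<Union>t\<in>R. PiE {i} (\<lambda>_. {t}))"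
      have Bnull: "B \<in> null_sets (PiM {i} (\<lambda>_::'i. lborel :: real measure))"
        unfolding B_def
      proof (rule null_sets_UN')
        show "countable R" using Rfin by (rule countable_finite)
        fix t assume "t \<in> R"
        have "emeasure (PiM {i} (\<lambda>_::'i. lborel :: real measure)) (PiE {i} (\<lambda>_. {t})) = 0"
          by (subst P.emeasure_PiM) auto
        moreover have "PiE {i} (\<lambda>_. {t}) \<in> sets (PiM {i} (\<lambda>_::'i. lborel :: real measure))"
          by (rule sets_PiM_I_finite) auto
        ultimately show "PiE {i} (\<lambda>_. {t}) \<in> null_sets (PiM {i} (\<lambda>_::'i. lborel :: real measure))"
          by (rule null_setsI)
      qed
      have sub: "(\<lambda>y. merge I {i} (x, y)) -` ?Z \<inter> space (PiM {i} (\<lambda>_::'i. lborel :: real measure)) \<subseteq> B"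
      proof
        fix y assume y: "y \<in> (\<lambda>y. merge I {i} (x, y)) -` ?Z \<inter> space (PiM {i} (\<lambda>_::'i. lborel :: real measure))"
        then have f0: "f (merge I {i} (x, y)) = 0" by blast
        have "c n (merge I {i} (x, y)) = c n x" for n
          by (rule polyfun_local[OF dc(1)]) (use insert(2) in \<open>auto simp: merge_def\<close>)
        moreover have "merge I {i} (x, y) i = y i" using insert(2) by (simp add: merge_def)
        ultimately have "y i \<in> R" using f0 dc(2)[of "merge I {i} (x, y)"] by (simp add: R_def)
        moreover have "y \<in> PiE {i} (\<lambda>_. {y i})"
        proof -
          have "y \<in> space (PiM {i} (\<lambda>_::'i. lborel :: real measure))" using y by blast
          then have "y \<in> extensional {i}" by (simp add: space_PiM PiE_iff)
          then show ?thesis by (intro PiE_I) (simp_all add: extensional_def)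
        qed
        ultimately show "y \<in> B" unfolding B_def by blast
      qed
      have Bs: "B \<in> sets (PiM {i} (\<lambda>_::'i. lborel :: real measure))" and B0: "emeasure (PiM {i} (\<lambda>_::'i. lborel :: real measure)) B = 0"
        using Bnull by (auto simp: null_sets_def)
      show ?case
        using emeasure_mono[OF sub Bs] B0 by simp
    qed
  qed
  finally show ?case using Zs by (intro null_setsI) (auto simp: Un_commute)
qed

definition wsum :: "'x set \<Rightarrow> 'x set set \<Rightarrow> 's set \<Rightarrow> ('s \<Rightarrow> real) \<Rightarrow> ('s \<Rightarrow> 'x measure) \<Rightarrow> 'x measure" where
  "wsum \<Omega> \<Sigma> S a \<nu> = measure_of \<Omega> \<Sigma> (\<lambda>A. \<Sum>s\<in>S. ennreal (a s) * emeasure (\<nu> s) A)"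

locale wsum_setup =
  fixes \<Omega> :: "'x set" and \<Sigma> :: "'x set set" and S :: "'s set" and a :: "'s \<Rightarrow> real" and \<nu> :: "'s \<Rightarrow> 'x measure"
  assumes fin: "finite S" and ne: "S \<noteq> {}"
    and sets_nu: "\<And>s. s \<in> S \<Longrightarrow> sets (\<nu> s) = \<Sigma>"
    and space_nu: "\<And>s. s \<in> S \<Longrightarrow> space (\<nu> s) = \<Omega>"
    and a_nonneg: "\<And>s. s \<in> S \<Longrightarrow> 0 \<le> a s"
begin

abbreviation "W \<equiv> wsum \<Omega> \<Sigma> S a \<nu>"

lemma sa: "sigma_algebra \<Omega> \<Sigma>"
proof -
  obtain s where "s \<in> S" using ne by blast
  then show ?thesis using sets.sigma_algebra_axioms[of "\<nu> s"] sets_nu space_nu by simp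
qed

lemma sets_W[simp]: "sets W = \<Sigma>" and space_W[simp]: "space W = \<Omega>"
  unfolding wsum_def using sigma_algebra.sets_measure_of_eq[OF sa] sigma_algebra.space_measure_of_eq[OF sa] by auto

lemma emeasure_W: "A \<in> \<Sigma> \<Longrightarrow> emeasure W A = (\<Sum>s\<in>S. ennreal (a s) * emeasure (\<nu> s) A)"
  unfolding wsum_def
proof (rule emeasure_measure_of_sigma[OF sa])
  show "positive \<Sigma> (\<lambda>A. \<Sum>s\<in>S. ennreal (a s) * emeasure (\<nu> s) A)"
    by (auto simp: positive_def)
  show "countably_additive \<Sigma> (\<lambda>A. \<Sum>s\<in>S. ennreal (a s) * emeasure (\<nu> s) A)"
  proof (rule countably_additiveI)
    fix A :: "nat \<Rightarrow> 'x set" assume A: "range A \<subseteq> \<Sigma>" "disjoint_family A" "\<Union> (range A) \<in> \<Sigma>"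
    have "(\<Sum>i. \<Sum>s\<in>S. ennreal (a s) * emeasure (\<nu> s) (A i)) = (\<Sum>s\<in>S. \<Sum>i. ennreal (a s) * emeasure (\<nu> s) (A i))"
      by (rule suminf_sum) auto
    also have "\<dots> = (\<Sum>s\<in>S. ennreal (a s) * emeasure (\<nu> s) (\<Union> (range A)))"
    proof (rule sum.cong[OF refl])
      fix s assume "s \<in> S"
      then show "(\<Sum>i. ennreal (a s) * emeasure (\<nu> s) (A i)) = ennreal (a s) * emeasure (\<nu> s) (\<Union> (range A))"
        using A sets_nu by (simp add: suminf_emeasure)
    qed
    finally show "(\<Sum>i. \<Sum>s\<in>S. ennreal (a s) * emeasure (\<nu> s) (A i)) = (\<Sum>s\<in>S. ennreal (a s) * emeasure (\<nu> s) (\<Union> (range A)))" .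
  qed
qed

lemma measurable_nu: "s \<in> S \<Longrightarrow> f \<in> borel_measurable W \<Longrightarrow> f \<in> borel_measurable (\<nu> s)"
  using sets_nu by (metis measurable_cong_sets sets_W)

lemma nn_integral_W:
  assumes f: "f \<in> borel_measurable W"
  shows "integral\<^sup>N W f = (\<Sum>s\<in>S. ennreal (a s) * integral\<^sup>N (\<nu> s) f)"
  using f
proof (induction rule: borel_measurable_induct)
  case (cong f g)
  have "integral\<^sup>N W f = integral\<^sup>N W g" using cong by (intro nn_integral_cong) auto
  moreover have "integral\<^sup>N (\<nu> s) f = integral\<^sup>N (\<nu> s) g" if "s \<in> S" for s
    using cong that space_nu by (intro nn_integral_cong) auto
  ultimately show ?case using cong by simp
next
  case (set A)
  then show ?case using sets_nu by (simp add: emeasure_W)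
next
  case (mult u c)
  have "integral\<^sup>N W (\<lambda>x. c * u x) = c * integral\<^sup>N W u" using mult by (simp add: nn_integral_cmult)
  moreover have "integral\<^sup>N (\<nu> s) (\<lambda>x. c * u x) = c * integral\<^sup>N (\<nu> s) u" if "s \<in> S" for s
    using nn_integral_cmult[OF measurable_nu[OF that mult(2)]] by simp
  ultimately show ?case using mult by (simp add: sum_distrib_left mult.left_commute cong: sum.cong)
next
  case (add u v)
  have "integral\<^sup>N W (\<lambda>x. v x + u x) = integral\<^sup>N W v + integral\<^sup>N W u" using add by (simp add: nn_integral_add)
  moreover have "integral\<^sup>N (\<nu> s) (\<lambda>x. v x + u x) = integral\<^sup>N (\<nu> s) v + integral\<^sup>N (\<nu> s) u" if "s \<in> S" for s
    using nn_integral_add[OF measurable_nu[OF that \<open>v \<in> borel_measurable W\<close>] measurable_nu[OF that \<open>u \<in> borel_measurable W\<close>]] by simp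
  ultimately show ?case using add by (simp add: sum.distrib distrib_left cong: sum.cong)
next
  case (seq U)
  have A: "integral\<^sup>N W (SUP i. U i) = (SUP i. integral\<^sup>N W (U i))"
    using seq nn_integral_monotone_convergence_SUP[of U W] by (simp add: SUP_apply[abs_def])
  have B: "integral\<^sup>N (\<nu> s) (SUP i. U i) = (SUP i. integral\<^sup>N (\<nu> s) (U i))" if "s \<in> S" for s
    using seq(3) measurable_nu[OF that seq(1)] nn_integral_monotone_convergence_SUP[of U "\<nu> s"] by (simp add: SUP_apply[abs_def])
  have C: "(SUP i. \<Sum>s\<in>S. ennreal (a s) * integral\<^sup>N (\<nu> s) (U i)) = (\<Sum>s\<in>S. SUP i. ennreal (a s) * integral\<^sup>N (\<nu> s) (U i))"
  proof (rule ennreal_SUP_sum)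
    fix s assume "s \<in> S"
    show "incseq (\<lambda>i. ennreal (a s) * integral\<^sup>N (\<nu> s) (U i))"
      using \<open>incseq U\<close> by (auto simp: incseq_def le_fun_def intro!: mult_left_mono nn_integral_mono)
  qed
  have "integral\<^sup>N W (SUP i. U i) = (SUP i. \<Sum>s\<in>S. ennreal (a s) * integral\<^sup>N (\<nu> s) (U i))"
    unfolding A using seq(5) by simp
  also have "\<dots> = (\<Sum>s\<in>S. SUP i. ennreal (a s) * integral\<^sup>N (\<nu> s) (U i))" by (rule C)
  also have "\<dots> = (\<Sum>s\<in>S. ennreal (a s) * (SUP i. integral\<^sup>N (\<nu> s) (U i)))"
    by (simp add: SUP_mult_left_ennreal)
  also have "\<dots> = (\<Sum>s\<in>S. ennreal (a s) * integral\<^sup>N (\<nu> s) (SUP i. U i))"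
    using B by simp
  finally show ?case .
qed

lemma prob_W: "sum a S = 1 \<Longrightarrow> (\<And>s. s \<in> S \<Longrightarrow> prob_space (\<nu> s)) \<Longrightarrow> prob_space W"
proof (rule prob_spaceI)
  assume a1: "sum a S = 1" and p: "\<And>s. s \<in> S \<Longrightarrow> prob_space (\<nu> s)"
  have "emeasure W (space W) = (\<Sum>s\<in>S. ennreal (a s) * emeasure (\<nu> s) \<Omega>)"
    using sets.top[of W] by (simp add: emeasure_W)
  also have "\<dots> = (\<Sum>s\<in>S. ennreal (a s))"
  proof (rule sum.cong[OF refl])
    fix s assume "s \<in> S"
    then have "emeasure (\<nu> s) \<Omega> = 1" using prob_space.emeasure_space_1[OF p[OF \<open>s \<in> S\<close>]] space_nu by simp
    then show "ennreal (a s) * emeasure (\<nu> s) \<Omega> = ennreal (a s)" by simp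
  qed
  also have "\<dots> = 1" using a_nonneg a1 by simp
  finally show "emeasure W (space W) = 1" .
qed

lemma integrable_W_nu:
  fixes f :: "'x \<Rightarrow> real"
  assumes f: "integrable W f" and s: "s \<in> S" "0 < a s"
  shows "integrable (\<nu> s) f"
proof -
  have fm: "f \<in> borel_measurable W" using f by auto
  have "ennreal (a s) * integral\<^sup>N (\<nu> s) (\<lambda>x. ennreal (norm (f x))) \<le> (\<Sum>s\<in>S. ennreal (a s) * integral\<^sup>N (\<nu> s) (\<lambda>x. ennreal (norm (f x))))"
    using s fin by (intro member_le_sum) auto
  also have "\<dots> = integral\<^sup>N W (\<lambda>x. ennreal (norm (f x)))"
    using fm by (intro nn_integral_W[symmetric]) auto
  also have "\<dots> < \<infinity>" using f by (simp add: integrable_iff_bounded)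
  finally have "integral\<^sup>N (\<nu> s) (\<lambda>x. ennreal (norm (f x))) < \<infinity>"
    using s by (cases "integral\<^sup>N (\<nu> s) (\<lambda>x. ennreal (norm (f x))) = 0") (auto simp: ennreal_mult_less_top)
  then show ?thesis using measurable_nu[OF s(1) fm] by (simp add: integrable_iff_bounded)
qed

lemma integral_W:
  fixes f :: "'x \<Rightarrow> real"
  assumes f: "integrable W f"
  shows "integral\<^sup>L W f = (\<Sum>s\<in>S. a s * integral\<^sup>L (\<nu> s) f)"
proof -
  define S' where "S' = {s\<in>S. 0 < a s}"
  have S'S: "S' \<subseteq> S" and finS': "finite S'" using fin by (auto simp: S'_def)
  have z: "a s = 0" if "s \<in> S - S'" for s using that a_nonneg by (force simp: S'_def)
  have fm: "f \<in> borel_measurable W" using f by auto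
  have int': "integrable (\<nu> s) f" if "s \<in> S'" for s using integrable_W_nu[OF f] that by (auto simp: S'_def)
  have P: "integral\<^sup>N W g = (\<Sum>s\<in>S'. ennreal (a s) * integral\<^sup>N (\<nu> s) g)" if "g \<in> borel_measurable W" for g
  proof -
    have "integral\<^sup>N W g = (\<Sum>s\<in>S. ennreal (a s) * integral\<^sup>N (\<nu> s) g)" by (rule nn_integral_W[OF that])
    also have "\<dots> = (\<Sum>s\<in>S'. ennreal (a s) * integral\<^sup>N (\<nu> s) g)"
      using S'S fin z by (intro sum.mono_neutral_right) auto
    finally show ?thesis .
  qed
  have fin1: "integral\<^sup>N (\<nu> s) (\<lambda>x. ennreal (f x)) < top" and fin2: "integral\<^sup>N (\<nu> s) (\<lambda>x. ennreal (- f x)) < top"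
    if "s \<in> S'" for s using int'[OF that] by (auto simp: real_integrable_def top.not_eq_extremum)
  have E: "enn2real (\<Sum>s\<in>S'. ennreal (a s) * integral\<^sup>N (\<nu> s) g) = (\<Sum>s\<in>S'. a s * enn2real (integral\<^sup>N (\<nu> s) g))"
    if "\<And>s. s \<in> S' \<Longrightarrow> integral\<^sup>N (\<nu> s) g < top" for g
  proof -
    have aS': "\<And>s. s \<in> S' \<Longrightarrow> 0 \<le> a s" using a_nonneg S'S by auto
    show ?thesis
      using that aS' by (subst enn2real_sum) (auto simp: enn2real_mult ennreal_mult_less_top intro!: sum.cong)
  qed
  have "integral\<^sup>L W f = enn2real (integral\<^sup>N W (\<lambda>x. ennreal (f x))) - enn2real (integral\<^sup>N W (\<lambda>x. ennreal (- f x)))"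
    by (rule real_lebesgue_integral_def[OF f])
  also have "\<dots> = (\<Sum>s\<in>S'. a s * enn2real (integral\<^sup>N (\<nu> s) (\<lambda>x. ennreal (f x)))) - (\<Sum>s\<in>S'. a s * enn2real (integral\<^sup>N (\<nu> s) (\<lambda>x. ennreal (- f x))))"
    using fm fin1 fin2 by (simp add: P E)
  also have "\<dots> = (\<Sum>s\<in>S'. a s * integral\<^sup>L (\<nu> s) f)"
    by (simp add: sum_subtractf[symmetric] right_diff_distrib real_lebesgue_integral_def[OF int'] cong: sum.cong)
  also have "\<dots> = (\<Sum>s\<in>S. a s * integral\<^sup>L (\<nu> s) f)"
    using S'S fin z by (intro sum.mono_neutral_left) auto
  finally show ?thesis .
qed

end

abbreviation Sg :: "nat \<Rightarrow> (nat \<Rightarrow> 'k::finite) set" where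
  "Sg N \<equiv> PiE {..<N} (\<lambda>_. UNIV)"

lemma mixture_wsum: "mixture M D q = wsum (space M) (sets M) UNIV (\<lambda>k. q$k) D"
  unfolding mixture_def wsum_def ..

lemma simplex_nonneg: "q \<in> prob_simplex \<Longrightarrow> 0 \<le> q $ k"
  by (simp add: prob_simplex_def)

lemma simplex_sum: "q \<in> prob_simplex \<Longrightarrow> (\<Sum>k\<in>UNIV. q $ k) = 1"
  by (simp add: prob_simplex_def)

lemma mix_setup:
  fixes D :: "'k::finite \<Rightarrow> 'z measure"
  assumes D_sets: "\<And>k. sets (D k) = sets M" and q: "q \<in> prob_simplex"
  shows "wsum_setup (space M) (sets M) UNIV (\<lambda>k. q$k) D"
  by unfold_locales (auto simp: D_sets sets_eq_imp_space_eq[OF D_sets] simplex_nonneg[OF q])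

lemma mix_props:
  fixes D :: "'k::finite \<Rightarrow> 'z measure"
  assumes D_prob: "\<And>k. prob_space (D k)" and D_sets: "\<And>k. sets (D k) = sets M" and q: "q \<in> prob_simplex"
  shows "prob_space (mixture M D q)" "sets (mixture M D q) = sets M" "space (mixture M D q) = space M"
    "\<And>A. A \<in> sets M \<Longrightarrow> emeasure (mixture M D q) A = (\<Sum>k\<in>UNIV. ennreal (q$k) * emeasure (D k) A)"
proof -
  interpret W: wsum_setup "space M" "sets M" UNIV "\<lambda>k. q$k" D by (rule mix_setup[OF D_sets q])
  show "prob_space (mixture M D q)" unfolding mixture_wsum
    by (rule W.prob_W) (use simplex_sum[OF q] D_prob in auto)
  show "sets (mixture M D q) = sets M" "space (mixture M D q) = space M" unfolding mixture_wsum by simp_all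
  show "\<And>A. A \<in> sets M \<Longrightarrow> emeasure (mixture M D q) A = (\<Sum>k\<in>UNIV. ennreal (q$k) * emeasure (D k) A)"
    unfolding mixture_wsum by (rule W.emeasure_W)
qed

lemma PiM_mix_setup:
  fixes D :: "'k::finite \<Rightarrow> 'z measure"
  assumes D_prob: "\<And>k. prob_space (D k)" and D_sets: "\<And>k. sets (D k) = sets M" and q: "q \<in> prob_simplex"
  shows "wsum_setup (space (PiM {..<N} (\<lambda>_. mixture M D q))) (sets (PiM {..<N} (\<lambda>_. mixture M D q))) (Sg N)
     (\<lambda>\<sigma>. \<Prod>i<N. q $ (\<sigma> i)) (\<lambda>\<sigma>. PiM {..<N} (\<lambda>i. D (\<sigma> i)))"
proof -
  have S: "sets (PiM {..<N} (\<lambda>i. D (\<sigma> i))) = sets (PiM {..<N} (\<lambda>_. mixture M D q))" for \<sigma> :: "nat \<Rightarrow> 'k"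
    by (rule sets_PiM_cong) (auto simp: D_sets mix_props[OF D_prob D_sets q])
  show ?thesis
  proof
    show "finite (Sg N :: (nat \<Rightarrow> 'k) set)" by (rule finite_PiE) auto
    show "(Sg N :: (nat \<Rightarrow> 'k) set) \<noteq> {}" by (simp add: PiE_eq_empty_iff)
    show "\<And>s. s \<in> Sg N \<Longrightarrow> sets (PiM {..<N} (\<lambda>i. D (s i))) = sets (PiM {..<N} (\<lambda>_. mixture M D q))"
      by (rule S)
    show "\<And>s. s \<in> Sg N \<Longrightarrow> space (PiM {..<N} (\<lambda>i. D (s i))) = space (PiM {..<N} (\<lambda>_. mixture M D q))"
      by (rule sets_eq_imp_space_eq[OF S])
    show "\<And>s. s \<in> Sg N \<Longrightarrow> 0 \<le> (\<Prod>i<N. q $ (s i))"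
      by (intro prod_nonneg) (auto simp: simplex_nonneg[OF q])
  qed
qed

lemma PiM_mix:
  fixes D :: "'k::finite \<Rightarrow> 'z measure"
  assumes D_prob: "\<And>k. prob_space (D k)" and D_sets: "\<And>k. sets (D k) = sets M" and q: "q \<in> prob_simplex"
  shows "PiM {..<N} (\<lambda>_. mixture M D q) = wsum (space (PiM {..<N} (\<lambda>_. mixture M D q))) (sets (PiM {..<N} (\<lambda>_. mixture M D q))) (Sg N)
     (\<lambda>\<sigma>. \<Prod>i<N. q $ (\<sigma> i)) (\<lambda>\<sigma>. PiM {..<N} (\<lambda>i. D (\<sigma> i)))"
proof -
  interpret W: wsum_setup "space (PiM {..<N} (\<lambda>_. mixture M D q))" "sets (PiM {..<N} (\<lambda>_. mixture M D q))" "Sg N"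
     "\<lambda>\<sigma>. \<Prod>i<N. q $ (\<sigma> i)" "\<lambda>\<sigma>. PiM {..<N} (\<lambda>i. D (\<sigma> i))"
    by (rule PiM_mix_setup[OF D_prob D_sets q])
  interpret PS: product_sigma_finite "\<lambda>_::nat. mixture M D q"
    unfolding product_sigma_finite_def using prob_space_imp_sigma_finite[OF mix_props(1)[OF D_prob D_sets q]] by simp
  note mp = mix_props[OF D_prob D_sets q]
  show ?thesis
  proof (rule PS.PiM_eqI[symmetric])
    show "finite {..<N}" by simp
    show "sets W.W = sets (PiM {..<N} (\<lambda>_. mixture M D q))" by simp
    fix A assume A: "\<And>i. i \<in> {..<N} \<Longrightarrow> A i \<in> sets (mixture M D q)"
    have AM: "A i \<in> sets M" if "i \<in> {..<N}" for i using A[OF that] mp by simp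
    have Ps: "PiE {..<N} A \<in> sets (PiM {..<N} (\<lambda>_. mixture M D q))"
      by (rule sets_PiM_I_finite) (use A in auto)
    have "emeasure W.W (PiE {..<N} A) = (\<Sum>\<sigma>\<in>Sg N. ennreal (\<Prod>i<N. q $ (\<sigma> i)) * emeasure (PiM {..<N} (\<lambda>i. D (\<sigma> i))) (PiE {..<N} A))"
      by (rule W.emeasure_W[OF Ps])
    also have "\<dots> = (\<Sum>\<sigma>\<in>Sg N. \<Prod>i<N. ennreal (q $ (\<sigma> i)) * emeasure (D (\<sigma> i)) (A i))"
    proof (rule sum.cong[OF refl])
      fix \<sigma> :: "nat \<Rightarrow> 'k" assume "\<sigma> \<in> Sg N"
      interpret PD: product_sigma_finite "\<lambda>i. D (\<sigma> i)"
        unfolding product_sigma_finite_def using prob_space_imp_sigma_finite[OF D_prob] by simp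
      have "emeasure (PiM {..<N} (\<lambda>i. D (\<sigma> i))) (PiE {..<N} A) = (\<Prod>i<N. emeasure (D (\<sigma> i)) (A i))"
        by (rule PD.emeasure_PiM) (use AM D_sets in auto)
      moreover have "ennreal (\<Prod>i<N. q $ (\<sigma> i)) = (\<Prod>i<N. ennreal (q $ (\<sigma> i)))"
        by (rule prod_ennreal[symmetric]) (simp add: simplex_nonneg[OF q])
      ultimately show "ennreal (\<Prod>i<N. q $ (\<sigma> i)) * emeasure (PiM {..<N} (\<lambda>i. D (\<sigma> i))) (PiE {..<N} A)
          = (\<Prod>i<N. ennreal (q $ (\<sigma> i)) * emeasure (D (\<sigma> i)) (A i))"
        by (simp add: prod.distrib)
    qed
    also have "\<dots> = (\<Prod>i<N. \<Sum>k\<in>UNIV. ennreal (q $ k) * emeasure (D k) (A i))"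
      by (rule prod_sum_PiE[symmetric]) auto
    also have "\<dots> = (\<Prod>i<N. emeasure (mixture M D q) (A i))"
      using AM mp by (intro prod.cong refl) auto
    finally show "emeasure W.W (PiE {..<N} A) = (\<Prod>i\<in>{..<N}. emeasure (mixture M D q) (A i))" .
  qed
qed

definition Cc :: "'z measure \<Rightarrow> ('k::finite \<Rightarrow> 'z measure) \<Rightarrow> ('h \<Rightarrow> 'z \<Rightarrow> real) \<Rightarrow> nat
    \<Rightarrow> ((nat \<Rightarrow> 'z) \<Rightarrow> 'h) \<Rightarrow> 'k \<Rightarrow> (nat \<Rightarrow> 'k) \<Rightarrow> real" where
  "Cc M D loss N Alg k \<sigma> = (\<integral>S. (\<integral>z. loss (Alg S) z \<partial>(D k)) \<partial>(PiM {..<N} (\<lambda>i. D (\<sigma> i))))"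

definition Ppoly :: "'z measure \<Rightarrow> ('k::finite \<Rightarrow> 'z measure) \<Rightarrow> ('h \<Rightarrow> 'z \<Rightarrow> real) \<Rightarrow> nat
    \<Rightarrow> ((nat \<Rightarrow> 'z) \<Rightarrow> 'h) \<Rightarrow> 'k \<Rightarrow> real^'k \<Rightarrow> real" where
  "Ppoly M D loss N Alg k q = (\<Sum>\<sigma>\<in>Sg N. Cc M D loss N Alg k \<sigma> * (\<Prod>i<N. q $ (\<sigma> i)))"

lemma ebar_poly:
  fixes D :: "'k::finite \<Rightarrow> 'z measure"
  assumes D_prob: "\<And>k. prob_space (D k)" and D_sets: "\<And>k. sets (D k) = sets M" and q: "q \<in> prob_simplex"
    and finite_exp: "integrable (sample_measure N (mixture M D q) \<Otimes>\<^sub>M D k) (\<lambda>(S, z). loss (Alg S) z)"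
  shows "ebar M D loss N Alg k q = Ppoly M D loss N Alg k q"
proof -
  interpret W: wsum_setup "space (PiM {..<N} (\<lambda>_. mixture M D q))" "sets (PiM {..<N} (\<lambda>_. mixture M D q))" "Sg N"
     "\<lambda>\<sigma>. \<Prod>i<N. q $ (\<sigma> i)" "\<lambda>\<sigma>. PiM {..<N} (\<lambda>i. D (\<sigma> i))"
    by (rule PiM_mix_setup[OF D_prob D_sets q])
  have pp: "prob_space (PiM {..<N} (\<lambda>_. mixture M D q))"
    by (rule prob_space_PiM) (rule mix_props(1)[OF D_prob D_sets q])
  interpret PS: pair_sigma_finite "PiM {..<N} (\<lambda>_. mixture M D q)" "D k"
    unfolding pair_sigma_finite_def using prob_space_imp_sigma_finite[OF pp] prob_space_imp_sigma_finite[OF D_prob] by simp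
  have int: "integrable (PiM {..<N} (\<lambda>_. mixture M D q)) (\<lambda>S. \<integral>z. loss (Alg S) z \<partial>(D k))"
    using PS.integrable_fst'[OF finite_exp[unfolded sample_measure_def]] by simp
  have PM: "PiM {..<N} (\<lambda>_. mixture M D q) = W.W"
    by (rule PiM_mix[where D=D and M=M]) (simp_all add: D_prob D_sets q)
  have "ebar M D loss N Alg k q = (\<integral>S. (\<integral>z. loss (Alg S) z \<partial>(D k)) \<partial>W.W)"
    unfolding ebar_def sample_measure_def by (simp only: PM[symmetric])
  also have "\<dots> = (\<Sum>\<sigma>\<in>Sg N. (\<Prod>i<N. q $ (\<sigma> i)) * Cc M D loss N Alg k \<sigma>)"
    unfolding Cc_def by (rule W.integral_W) (use int in \<open>simp only: PM[symmetric]\<close>)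
  finally show ?thesis unfolding Ppoly_def by (simp add: mult.commute)
qed

definition Pc :: "nat \<Rightarrow> ((nat \<Rightarrow> 'k::finite) \<Rightarrow> real) \<Rightarrow> real^'k \<Rightarrow> real" where
  "Pc N C q = (\<Sum>\<sigma>\<in>Sg N. C \<sigma> * (\<Prod>i<N. q $ (\<sigma> i)))"

definition dPc :: "nat \<Rightarrow> ((nat \<Rightarrow> 'k::finite) \<Rightarrow> real) \<Rightarrow> 'k \<Rightarrow> real^'k \<Rightarrow> real" where
  "dPc N C j q = (\<Sum>\<sigma>\<in>Sg N. C \<sigma> * (\<Sum>i<N. if \<sigma> i = j then (\<Prod>l\<in>{..<N} - {i}. q $ (\<sigma> l)) else 0))"

lemma sum_delta_mult: "(\<Sum>j\<in>UNIV. (h::real^'k::finite) $ j * (if m = j then X else 0)) = h $ m * X"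
  by (simp add: if_distrib[of "\<lambda>y. h $ _ * y"] cong: if_cong)

lemma dPc_lin: "(\<Sum>j\<in>UNIV. h $ j * dPc N C j q) = (\<Sum>\<sigma>\<in>Sg N. C \<sigma> * (\<Sum>i<N. h $ (\<sigma> i) * (\<Prod>l\<in>{..<N} - {i}. q $ (\<sigma> l))))"
proof -
  have "(\<Sum>j\<in>UNIV. h $ j * dPc N C j q) = (\<Sum>j\<in>UNIV. \<Sum>\<sigma>\<in>Sg N. \<Sum>i<N. C \<sigma> * (h $ j * (if \<sigma> i = j then (\<Prod>l\<in>{..<N} - {i}. q $ (\<sigma> l)) else 0)))"
    unfolding dPc_def by (simp add: sum_distrib_left mult.left_commute)
  also have "\<dots> = (\<Sum>\<sigma>\<in>Sg N. \<Sum>i<N. \<Sum>j\<in>UNIV. C \<sigma> * (h $ j * (if \<sigma> i = j then (\<Prod>l\<in>{..<N} - {i}. q $ (\<sigma> l)) else 0)))"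
    by (subst sum.swap) (simp add: sum.swap[of _ UNIV])
  also have "\<dots> = (\<Sum>\<sigma>\<in>Sg N. \<Sum>i<N. C \<sigma> * (h $ (\<sigma> i) * (\<Prod>l\<in>{..<N} - {i}. q $ (\<sigma> l))))"
    by (simp only: sum_distrib_left[symmetric] sum_delta_mult)
  finally show ?thesis by (simp add: sum_distrib_left)
qed

lemma Pc_deriv: "(Pc N C has_derivative (\<lambda>h. \<Sum>j\<in>UNIV. h $ j * dPc N C j q)) (at q within X)"
proof -
  have "((\<lambda>q. \<Sum>\<sigma>\<in>Sg N. C \<sigma> * (\<Prod>i<N. q $ (\<sigma> i))) has_derivative
      (\<lambda>h. \<Sum>\<sigma>\<in>Sg N. C \<sigma> * (\<Sum>i<N. h $ (\<sigma> i) * (\<Prod>l\<in>{..<N} - {i}. q $ (\<sigma> l))))) (at q within X)"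
    by (intro has_derivative_sum has_derivative_mult_right has_derivative_prod bounded_linear_imp_has_derivative bounded_linear_vec_nth)
  then show ?thesis unfolding dPc_lin[symmetric] Pc_def[abs_def] .
qed

inductive vpoly :: "(real^'k::finite \<Rightarrow> real) \<Rightarrow> bool" where
  vp_const: "vpoly (\<lambda>x. c)"
| vp_var: "vpoly (\<lambda>x. x $ k)"
| vp_add: "vpoly f \<Longrightarrow> vpoly g \<Longrightarrow> vpoly (\<lambda>x. f x + g x)"
| vp_mult: "vpoly f \<Longrightarrow> vpoly g \<Longrightarrow> vpoly (\<lambda>x. f x * g x)"

lemma vpoly_sum: "finite S \<Longrightarrow> (\<And>s. s \<in> S \<Longrightarrow> vpoly (f s)) \<Longrightarrow> vpoly (\<lambda>x. \<Sum>s\<in>S. f s x)"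
  by (induction S rule: finite_induct) (auto intro: vpoly.intros)

lemma vpoly_prod: "finite S \<Longrightarrow> (\<And>s. s \<in> S \<Longrightarrow> vpoly (f s)) \<Longrightarrow> vpoly (\<lambda>x. \<Prod>s\<in>S. f s x)"
  by (induction S rule: finite_induct) (auto intro: vpoly.intros)

lemma vpoly_diff: "vpoly f \<Longrightarrow> vpoly g \<Longrightarrow> vpoly (\<lambda>x. f x - g x)"
proof -
  assume "vpoly f" "vpoly g"
  have e: "(\<lambda>x. f x - g x) = (\<lambda>x. f x + (-1) * g x)" by (rule ext) simp
  show ?thesis unfolding e by (rule vp_add, fact, rule vp_mult, rule vp_const, fact)
qed

lemma vpoly_compose: "vpoly F \<Longrightarrow> (\<And>k. polyfun J (\<lambda>x. L x $ k)) \<Longrightarrow> polyfun J (\<lambda>x. F (L x))"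
  by (induction rule: vpoly.induct) (auto intro: polyfun.intros)

lemma vpoly_dPc: "vpoly (dPc N C j)"
  unfolding dPc_def[abs_def]
proof (intro vpoly_sum vp_mult vp_const)
  fix \<sigma> :: "nat \<Rightarrow> 'a" and i
  show "vpoly (\<lambda>x. if \<sigma> i = j then \<Prod>l\<in>{..<N} - {i}. x $ \<sigma> l else 0)"
    by (cases "\<sigma> i = j") (auto intro!: vpoly_prod vp_var vp_const)
qed (auto intro!: finite_PiE)

lemma sum_axis_diff: "(\<Sum>m\<in>UNIV. (axis j (1::real) - axis j' 1) $ m * (d m :: real)) = d j - d j'"
  by (simp add: axis_def left_diff_distrib sum_subtractf if_distrib[of "\<lambda>y. y * d _"] cong: if_cong)

lemma lagrange:
  fixes C :: "'k::finite \<Rightarrow> (nat \<Rightarrow> 'k) \<Rightarrow> real" and p :: "real^'k"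
  assumes p: "p \<in> prob_simplex" "\<And>k. 0 < p$k"
    and min: "\<And>q. q \<in> prob_simplex \<Longrightarrow> (\<Sum>k\<in>UNIV. p$k * Pc N (C k) p) \<le> (\<Sum>k\<in>UNIV. p$k * Pc N (C k) q)"
  shows "(\<Sum>k\<in>UNIV. p$k * dPc N (C k) j p) = (\<Sum>k\<in>UNIV. p$k * dPc N (C k) j' p)"
proof -
  define v :: "real^'k" where "v = axis j 1 - axis j' 1"
  define \<phi> where "\<phi> t = (\<Sum>k\<in>UNIV. p$k * Pc N (C k) (p + t *\<^sub>R v))" for t :: real
  define G where "G j = (\<Sum>k\<in>UNIV. p$k * dPc N (C k) j p)" for j
  have 1: "((\<lambda>t::real. p + t *\<^sub>R v) has_derivative (\<lambda>t. t *\<^sub>R v)) (at 0)"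
    by (intro derivative_eq_intros) auto
  have 2: "((\<lambda>q. \<Sum>k\<in>UNIV. p$k * Pc N (C k) q) has_derivative (\<lambda>h. \<Sum>k\<in>UNIV. p$k * (\<Sum>m\<in>UNIV. h$m * dPc N (C k) m p))) (at (p + 0 *\<^sub>R v))"
    by (simp, intro has_derivative_sum has_derivative_mult_right Pc_deriv)
  have lin: "(\<Sum>k\<in>UNIV. p$k * (\<Sum>m\<in>UNIV. (t *\<^sub>R v)$m * dPc N (C k) m p)) = t * (G j - G j')" for t
  proof -
    have eqk: "(\<Sum>m\<in>UNIV. (t *\<^sub>R v)$m * dPc N (C k) m p) = t * (dPc N (C k) j p - dPc N (C k) j' p)" for k
      using sum_axis_diff[of j j' "\<lambda>m. dPc N (C k) m p"] by (simp add: v_def mult.assoc sum_distrib_left[symmetric])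
    have "(\<Sum>k\<in>UNIV. p$k * (\<Sum>m\<in>UNIV. (t *\<^sub>R v)$m * dPc N (C k) m p)) = (\<Sum>k\<in>UNIV. t * (p$k * dPc N (C k) j p) - t * (p$k * dPc N (C k) j' p))"
      by (intro sum.cong refl) (simp only: eqk algebra_simps)
    also have "\<dots> = t * (G j - G j')" by (simp add: G_def sum_subtractf sum_distrib_left right_diff_distrib)
    finally show ?thesis .
  qed
  have "(\<phi> has_derivative (\<lambda>t. t * (G j - G j'))) (at 0)"
    using has_derivative_compose[OF 1 2] unfolding \<phi>_def lin .
  then have D: "(\<phi> has_field_derivative (G j - G j')) (at 0)"
    by (rule has_derivative_imp_has_field_derivative) simp
  define d where "d = min (p$j) (p$j')"
  have d0: "0 < d" using p(2) by (simp add: d_def)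
  have "\<forall>t. \<bar>0 - t\<bar> < d \<longrightarrow> \<phi> 0 \<le> \<phi> t"
  proof (intro allI impI)
    fix t :: real assume t: "\<bar>0 - t\<bar> < d"
    have "p + t *\<^sub>R v \<in> prob_simplex"
      unfolding prob_simplex_def
    proof (intro CollectI conjI allI)
      fix k
      have "0 \<le> p $ k + t * ((if k = j then 1 else 0) - (if k = j' then 1 else 0))"
        using t p(2)[of k] by (auto simp: d_def)
      then show "0 \<le> (p + t *\<^sub>R v) $ k" by (simp add: v_def axis_def)
    next
      have "(\<Sum>k\<in>UNIV. (p + t *\<^sub>R v) $ k) = (\<Sum>k\<in>UNIV. p $ k) + t * (\<Sum>k\<in>UNIV. (axis j (1::real) - axis j' 1) $ k * 1)"
        by (simp add: v_def sum.distrib sum_distrib_left)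
      also have "\<dots> = 1" using sum_axis_diff[of j j' "\<lambda>_. 1"] simplex_sum[OF p(1)] by simp
      finally show "(\<Sum>k\<in>UNIV. (p + t *\<^sub>R v) $ k) = 1" .
    qed
    then show "\<phi> 0 \<le> \<phi> t" using min unfolding \<phi>_def by simp
  qed
  from DERIV_local_min[OF D d0 this] show ?thesis unfolding G_def by simp
qed

lemma vsum_deriv: "(vsum has_derivative vsum) (at (p::real^'k::finite))"
proof -
  have "((\<lambda>q::real^'k. \<Sum>k\<in>UNIV. q$k) has_derivative (\<lambda>h. \<Sum>k\<in>UNIV. h$k)) (at p)"
    by (intro has_derivative_sum bounded_linear_imp_has_derivative bounded_linear_vec_nth)
  then show ?thesis unfolding vsum_def[abs_def] .
qed

lemma conserv_deriv:
  fixes C :: "'k::finite \<Rightarrow> (nat \<Rightarrow> 'k) \<Rightarrow> real" and p :: "real^'k"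
  assumes s: "0 < vsum p"
    and eqG: "\<And>j j'. (\<Sum>k\<in>UNIV. (p /\<^sub>R vsum p)$k * dPc N (C k) j (p /\<^sub>R vsum p)) = (\<Sum>k\<in>UNIV. (p /\<^sub>R vsum p)$k * dPc N (C k) j' (p /\<^sub>R vsum p))"
  shows "((\<lambda>q. \<Sum>k\<in>UNIV. q$k * Pc N (C k) (q /\<^sub>R vsum q)) has_derivative (\<lambda>h. (\<chi> k. Pc N (C k) (p /\<^sub>R vsum p)) \<bullet> h)) (at p)"
proof -
  define u where "u = p /\<^sub>R vsum p"
  define gd where "gd h = inverse (vsum p) *\<^sub>R h + (- (inverse (vsum p) * vsum h * inverse (vsum p))) *\<^sub>R p" for h :: "real^'k"
  have g: "((\<lambda>q. q /\<^sub>R vsum q) has_derivative gd) (at p)"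
  proof -
    have inv: "((\<lambda>q. inverse (vsum q)) has_derivative (\<lambda>h. - (inverse (vsum p) * vsum h * inverse (vsum p)))) (at p)"
      by (rule Deriv.has_derivative_inverse[OF _ vsum_deriv]) (use s in simp)
    show ?thesis unfolding gd_def
      by (rule has_derivative_scaleR[OF inv has_derivative_ident])
  qed
  have Pg: "((\<lambda>q. Pc N (C k) (q /\<^sub>R vsum q)) has_derivative (\<lambda>h. \<Sum>j\<in>UNIV. gd h $ j * dPc N (C k) j u)) (at p)" for k
    using has_derivative_compose[OF g Pc_deriv] unfolding u_def .
  have F: "((\<lambda>q. \<Sum>k\<in>UNIV. q$k * Pc N (C k) (q /\<^sub>R vsum q)) has_derivative
     (\<lambda>h. \<Sum>k\<in>UNIV. p$k * (\<Sum>j\<in>UNIV. gd h $ j * dPc N (C k) j u) + h$k * Pc N (C k) (p /\<^sub>R vsum p))) (at p)"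
  proof (rule has_derivative_sum)
    fix k :: 'k
    have vk: "((\<lambda>q::real^'k. q$k) has_derivative (\<lambda>h. h$k)) (at p)"
      by (rule bounded_linear_imp_has_derivative[OF bounded_linear_vec_nth])
    show "((\<lambda>q. q$k * Pc N (C k) (q /\<^sub>R vsum q)) has_derivative
     (\<lambda>h. p$k * (\<Sum>j\<in>UNIV. gd h $ j * dPc N (C k) j u) + h$k * Pc N (C k) (p /\<^sub>R vsum p))) (at p)"
      by (rule has_derivative_mult[OF vk Pg])
  qed
  define c where "c = (\<Sum>k\<in>UNIV. u$k * dPc N (C k) (undefined::'k) u)"
  have Gc: "(\<Sum>k\<in>UNIV. u$k * dPc N (C k) j u) = c" for j
    unfolding c_def u_def by (rule eqG)
  have pu: "p$k = vsum p * u$k" for k using s by (simp add: u_def)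
  have zero: "(\<Sum>k\<in>UNIV. p$k * (\<Sum>j\<in>UNIV. gd h $ j * dPc N (C k) j u)) = 0" for h
  proof -
    have "(\<Sum>k\<in>UNIV. p$k * (\<Sum>j\<in>UNIV. gd h $ j * dPc N (C k) j u)) = (\<Sum>j\<in>UNIV. gd h $ j * (vsum p * (\<Sum>k\<in>UNIV. u$k * dPc N (C k) j u)))"
    proof -
      have "(\<Sum>k\<in>UNIV. p$k * (\<Sum>j\<in>UNIV. gd h $ j * dPc N (C k) j u)) = (\<Sum>k\<in>UNIV. \<Sum>j\<in>UNIV. gd h $ j * (vsum p * (u$k * dPc N (C k) j u)))"
        by (intro sum.cong refl) (subst pu, simp add: sum_distrib_left mult_ac)
      also have "\<dots> = (\<Sum>j\<in>UNIV. \<Sum>k\<in>UNIV. gd h $ j * (vsum p * (u$k * dPc N (C k) j u)))"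
        by (rule sum.swap)
      also have "\<dots> = (\<Sum>j\<in>UNIV. gd h $ j * (vsum p * (\<Sum>k\<in>UNIV. u$k * dPc N (C k) j u)))"
        by (simp add: sum_distrib_left)
      finally show ?thesis .
    qed
    also have "\<dots> = vsum p * c * (\<Sum>j\<in>UNIV. gd h $ j)"
      by (simp add: Gc sum_distrib_left sum_distrib_right mult_ac)
    also have "(\<Sum>j\<in>UNIV. gd h $ j) = inverse (vsum p) * vsum h - inverse (vsum p) * vsum h * inverse (vsum p) * vsum p"
    proof -
      have "(\<Sum>j\<in>UNIV. gd h $ j) = (\<Sum>j\<in>UNIV. inverse (vsum p) * h$j - (inverse (vsum p) * vsum h * inverse (vsum p)) * p$j)"
        by (simp add: gd_def)
      also have "\<dots> = inverse (vsum p) * vsum h - inverse (vsum p) * vsum h * inverse (vsum p) * vsum p"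
        by (simp only: sum_subtractf sum_distrib_left[symmetric] vsum_def)
      finally show ?thesis .
    qed
    also have "\<dots> = 0" using s by simp
    finally show ?thesis by simp
  qed
  show ?thesis
  proof (rule has_derivative_eq_rhs[OF F])
    show "(\<lambda>h. \<Sum>k\<in>UNIV. p$k * (\<Sum>j\<in>UNIV. gd h $ j * dPc N (C k) j u) + h$k * Pc N (C k) (p /\<^sub>R vsum p)) = (\<lambda>h. (\<chi> k. Pc N (C k) (p /\<^sub>R vsum p)) \<bullet> h)"
    proof
      fix h
      show "(\<Sum>k\<in>UNIV. p$k * (\<Sum>j\<in>UNIV. gd h $ j * dPc N (C k) j u) + h$k * Pc N (C k) (p /\<^sub>R vsum p)) = (\<chi> k. Pc N (C k) (p /\<^sub>R vsum p)) \<bullet> h"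
        using zero[of h] by (simp add: sum.distrib inner_vec_def mult.commute)
    qed
  qed
qed

lemma simplex_le1: "q \<in> prob_simplex \<Longrightarrow> q $ k \<le> 1"
proof -
  assume q: "q \<in> prob_simplex"
  have "q $ k \<le> (\<Sum>m\<in>UNIV. q $ m)"
    by (rule member_le_sum) (auto simp: simplex_nonneg[OF q])
  then show ?thesis using simplex_sum[OF q] by simp
qed

lemma Pc_bound: "q \<in> prob_simplex \<Longrightarrow> - (\<Sum>\<sigma>\<in>Sg N. \<bar>C \<sigma>\<bar>) \<le> Pc N C q"
proof -
  assume q: "q \<in> prob_simplex"
  have "\<bar>Pc N C q\<bar> \<le> (\<Sum>\<sigma>\<in>Sg N. \<bar>C \<sigma> * (\<Prod>i<N. q $ (\<sigma> i))\<bar>)"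
    unfolding Pc_def by (rule sum_abs)
  also have "\<dots> \<le> (\<Sum>\<sigma>\<in>Sg N. \<bar>C \<sigma>\<bar>)"
  proof (rule sum_mono)
    fix \<sigma> :: "nat \<Rightarrow> 'a"
    have "0 \<le> (\<Prod>i<N. q $ (\<sigma> i))" "(\<Prod>i<N. q $ (\<sigma> i)) \<le> 1"
      by (auto intro!: prod_nonneg prod_le_1 simp: simplex_nonneg[OF q] simplex_le1[OF q])
    then show "\<bar>C \<sigma> * (\<Prod>i<N. q $ (\<sigma> i))\<bar> \<le> \<bar>C \<sigma>\<bar>"
      by (simp add: abs_mult mult_left_le)
  qed
  finally show ?thesis by simp
qed

definition Lft :: "'k::finite \<Rightarrow> ('k \<Rightarrow> real) \<Rightarrow> real^'k" where
  "Lft k0 x = (\<chi> k. if k = k0 then 1 - (\<Sum>j\<in>UNIV - {k0}. x j) else x k)"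

lemma polyfun_Lft: "polyfun (UNIV - {k0}) (\<lambda>x. Lft k0 x $ k)"
proof (cases "k = k0")
  case True
  then show ?thesis unfolding Lft_def
    by (simp, intro polyfun_diff pf_const polyfun_sum pf_var) auto
next
  case False
  then show ?thesis unfolding Lft_def by (simp add: pf_var)
qed

lemma sum_split_k0: "(\<Sum>k\<in>UNIV. f k) = f k0 + (\<Sum>j\<in>UNIV - {k0}. f j)" for f :: "'k::finite \<Rightarrow> real"
  by (rule sum.remove) auto

lemma Lft_restrict: "p \<in> prob_simplex \<Longrightarrow> Lft k0 (restrict (\<lambda>i. p $ i) (UNIV - {k0})) = p"
proof -
  assume p: "p \<in> prob_simplex"
  have "p $ k0 = 1 - (\<Sum>j\<in>UNIV - {k0}. p $ j)"
    using simplex_sum[OF p] sum_split_k0[of "\<lambda>k. p $ k" k0] by simp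
  then show ?thesis unfolding Lft_def by (simp add: vec_eq_iff)
qed

lemma simplex_null_vpoly:
  fixes R :: "real^'k::finite \<Rightarrow> real"
  assumes R: "vpoly R" and u: "u \<in> prob_simplex" "R u \<noteq> 0"
  shows "simplex_null {p \<in> prob_simplex. (\<exists>k. p$k = 0) \<or> R p = 0}"
  unfolding simplex_null_def
proof
  fix k0 :: 'k
  define J where "J = UNIV - {k0}"
  let ?LB = "PiM J (\<lambda>_::'k. lborel :: real measure)"
  define f1 where "f1 x = (\<Prod>j\<in>J. x j)" for x :: "'k \<Rightarrow> real"
  define f2 where "f2 x = 1 - (\<Sum>j\<in>J. x j)" for x :: "'k \<Rightarrow> real"
  define f3 where "f3 x = R (Lft k0 x)" for x
  have finJ: "finite J" by simp
  have pf1: "polyfun J f1" unfolding f1_def[abs_def] by (intro polyfun_prod pf_var) auto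
  have pf2: "polyfun J f2" unfolding f2_def[abs_def] by (intro polyfun_diff pf_const polyfun_sum pf_var) auto
  have pf3: "polyfun J f3" unfolding f3_def[abs_def] J_def by (rule vpoly_compose[OF R polyfun_Lft])
  have m1[measurable]: "f1 \<in> borel_measurable ?LB" by (rule polyfun_measurable[OF pf1])
  have m2[measurable]: "f2 \<in> borel_measurable ?LB" by (rule polyfun_measurable[OF pf2])
  have m3[measurable]: "f3 \<in> borel_measurable ?LB" by (rule polyfun_measurable[OF pf3])
  have Z1: "{x \<in> space ?LB. f1 x = 0} \<in> null_sets ?LB"
    by (rule polyfun_null[OF finJ pf1, of "\<lambda>_. 1"]) (simp add: f1_def)
  have Z2: "{x \<in> space ?LB. f2 x = 0} \<in> null_sets ?LB"
    by (rule polyfun_null[OF finJ pf2, of "\<lambda>_. 0"]) (simp add: f2_def)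
  have Z3: "{x \<in> space ?LB. f3 x = 0} \<in> null_sets ?LB"
    by (rule polyfun_null[OF finJ pf3, of "restrict (\<lambda>i. u $ i) J"]) (simp add: f3_def J_def Lft_restrict[OF u(1)] u(2))
  define T where "T = {x \<in> space ?LB. (\<forall>j\<in>J. 0 \<le> x j) \<and> 0 \<le> f2 x \<and> (f1 x = 0 \<or> f2 x = 0 \<or> f3 x = 0)}"
  have Ts: "T \<in> sets ?LB"
  proof -
    have "T = PiE J (\<lambda>_. {0..}) \<inter> {x \<in> space ?LB. 0 \<le> f2 x \<and> (f1 x = 0 \<or> f2 x = 0 \<or> f3 x = 0)}"
      unfolding T_def by (auto simp: space_PiM PiE_iff extensional_def)
    moreover have "PiE J (\<lambda>_. {0..}) \<in> sets ?LB" by (rule sets_PiM_I_finite) auto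
    moreover have "{x \<in> space ?LB. 0 \<le> f2 x \<and> (f1 x = 0 \<or> f2 x = 0 \<or> f3 x = 0)} \<in> sets ?LB" by measurable
    ultimately show ?thesis by simp
  qed
  have "T \<subseteq> {x \<in> space ?LB. f1 x = 0} \<union> {x \<in> space ?LB. f2 x = 0} \<union> {x \<in> space ?LB. f3 x = 0}"
    unfolding T_def by blast
  then have Tnull: "T \<in> null_sets ?LB"
    using null_sets_subset[OF null_sets.Un[OF null_sets.Un[OF Z1 Z2] Z3] Ts] by blast
  have "(\<lambda>p. restrict (\<lambda>i. p $ i) J) ` {p \<in> prob_simplex. (\<exists>k. p$k = 0) \<or> R p = 0} = T"
  proof (intro equalityI subsetI)
    fix x assume "x \<in> (\<lambda>p. restrict (\<lambda>i. p $ i) J) ` {p \<in> prob_simplex. (\<exists>k. p$k = 0) \<or> R p = 0}"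
    then obtain p where p: "p \<in> prob_simplex" "(\<exists>k. p$k = 0) \<or> R p = 0" and x: "x = restrict (\<lambda>i. p $ i) J" by blast
    have Lx: "Lft k0 x = p" using Lft_restrict[OF p(1), of k0] by (simp add: x J_def)
    have f2x: "f2 x = p $ k0"
      using simplex_sum[OF p(1)] sum_split_k0[of "\<lambda>k. p $ k" k0] by (simp add: f2_def x J_def)
    have "x \<in> space ?LB" by (simp add: x space_PiM)
    moreover have "\<forall>j\<in>J. 0 \<le> x j" using p(1) by (simp add: x simplex_nonneg)
    moreover have "0 \<le> f2 x" using f2x simplex_nonneg[OF p(1)] by simp
    moreover have "f1 x = 0 \<or> f2 x = 0 \<or> f3 x = 0"
    proof (cases "R p = 0")
      case True then show ?thesis by (simp add: f3_def Lx)
    next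
      case False
      then obtain k where k: "p $ k = 0" using p(2) by blast
      show ?thesis
      proof (cases "k = k0")
        case True then show ?thesis using k f2x by simp
      next
        case False
        then have "k \<in> J" "x k = 0" using k by (auto simp: x J_def)
        then have "f1 x = 0" unfolding f1_def by (intro prod_zero) auto
        then show ?thesis by simp
      qed
    qed
    ultimately show "x \<in> T" unfolding T_def by blast
  next
    fix x assume xT: "x \<in> T"
    define p where "p = Lft k0 x"
    have xs: "x \<in> space ?LB" and x0: "\<forall>j\<in>J. 0 \<le> x j" and f2: "0 \<le> f2 x" and alt: "f1 x = 0 \<or> f2 x = 0 \<or> f3 x = 0"
      using xT by (auto simp: T_def)
    have pk0: "p $ k0 = f2 x" by (simp add: p_def Lft_def f2_def J_def)
    have pj: "p $ j = x j" if "j \<in> J" for j using that by (simp add: p_def Lft_def J_def)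
    have ps: "p \<in> prob_simplex"
      unfolding prob_simplex_def
    proof (intro CollectI conjI allI)
      fix k show "0 \<le> p $ k" using pk0 pj x0 f2 by (cases "k = k0") (auto simp: J_def)
    next
      have "(\<Sum>k\<in>UNIV. p $ k) = p $ k0 + (\<Sum>j\<in>J. p $ j)" unfolding J_def by (rule sum_split_k0)
      also have "(\<Sum>j\<in>J. p $ j) = (\<Sum>j\<in>J. x j)" by (rule sum.cong) (auto simp: pj)
      finally show "(\<Sum>k\<in>UNIV. p $ k) = 1" using pk0 by (simp add: f2_def)
    qed
    have xr: "restrict (\<lambda>i. p $ i) J = x"
    proof
      fix i show "restrict (\<lambda>i. p $ i) J i = x i"
        using xs pj by (cases "i \<in> J") (auto simp: space_PiM PiE_def extensional_def)
    qed
    have "(\<exists>k. p$k = 0) \<or> R p = 0"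
    proof -
      { assume "f1 x = 0"
        then obtain j where "j \<in> J" "x j = 0" unfolding f1_def using prod_zero_iff[OF finJ] by blast
        then have "\<exists>k. p$k = 0" using pj[of j] by metis }
      moreover { assume "f2 x = 0" then have "\<exists>k. p$k = 0" using pk0 by auto }
      moreover { assume "f3 x = 0" then have "R p = 0" by (simp add: f3_def p_def) }
      ultimately show ?thesis using alt by blast
    qed
    then show "x \<in> (\<lambda>p. restrict (\<lambda>i. p $ i) J) ` {p \<in> prob_simplex. (\<exists>k. p$k = 0) \<or> R p = 0}"
      using ps xr by (intro image_eqI[of _ _ p]) auto
  qed
  with Tnull show "(\<lambda>p. restrict (\<lambda>i. p $ i) (UNIV - {k0})) ` {p \<in> prob_simplex. (\<exists>k. p$k = 0) \<or> R p = 0}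
      \<in> null_sets (PiM (UNIV - {k0}) (\<lambda>_. lborel))"
    by (simp add: J_def)
qed

lemma orthant_unit:
  fixes p :: "real^'k::finite"
  assumes "p \<in> orthant0"
  shows "0 < vsum p" "p /\<^sub>R vsum p \<in> prob_simplex"
proof -
  have nn: "\<And>k. 0 \<le> p $ k" and nz: "p \<noteq> 0" using assms by (auto simp: orthant0_def)
  then obtain k where "p $ k \<noteq> 0" by (auto simp: vec_eq_iff)
  then have "0 < p $ k" using nn[of k] by simp
  then show s: "0 < vsum p" unfolding vsum_def by (intro sum_pos2[of UNIV k]) (auto simp: nn)
  show "p /\<^sub>R vsum p \<in> prob_simplex"
  proof -
    have "(\<Sum>k\<in>UNIV. (p /\<^sub>R vsum p) $ k) = inverse (vsum p) * vsum p"
      by (simp add: vsum_def sum_distrib_left)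
    also have "\<dots> = 1" using s by simp
    finally show ?thesis unfolding prob_simplex_def using s nn by auto
  qed
qed

theorem theorem7p2:
  fixes M :: "'z measure"
    and D :: "'k::finite \<Rightarrow> 'z measure"
    and loss :: "'h \<Rightarrow> 'z \<Rightarrow> real"
    and N :: nat
    and Alg :: "(nat \<Rightarrow> 'z) \<Rightarrow> 'h"
  assumes D_prob: "\<And>k. prob_space (D k)"
    and D_sets: "\<And>k. sets (D k) = sets M"
    and N_pos: "N \<ge> 1"
    and finite_exp: "\<And>k q. q \<in> prob_simplex \<Longrightarrow>
        integrable (sample_measure N (mixture M D q) \<Otimes>\<^sub>M D k) (\<lambda>(S, z). loss (Alg S) z)"
  shows "(\<forall>p\<in>orthant0.
            (Lsame M D loss N Alg has_derivative
               (\<lambda>h. (\<chi> k. fk M D loss N Alg k p) \<bullet> h)) (at p within orthant0))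
       \<or> (\<exists>U. U \<subseteq> prob_simplex \<and> simplex_null U \<and>
            (\<forall>p\<in>prob_simplex - U. Lstar M D loss N Alg p < Lsame M D loss N Alg p))"
proof -
  define C where "C k = Cc M D loss N Alg k" for k
  define G where "G j q = (\<Sum>k\<in>UNIV. q$k * dPc N (C k) j q)" for j q
  have ebarP: "ebar M D loss N Alg k q = Pc N (C k) q" if q: "q \<in> prob_simplex" for k q
  proof -
    have "ebar M D loss N Alg k q = Ppoly M D loss N Alg k q"
      by (rule ebar_poly[where D=D and M=M]) (use D_prob D_sets finite_exp q in auto)
    then show ?thesis unfolding Ppoly_def Pc_def C_def .
  qed
  have Lsame_eq: "Lsame M D loss N Alg q = (\<Sum>k\<in>UNIV. q$k * Pc N (C k) (q /\<^sub>R vsum q))" if "q \<in> orthant0" for q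
    unfolding Lsame_def fk_def using ebarP[OF orthant_unit(2)[OF that]] by simp
  show ?thesis
  proof (cases "\<forall>u\<in>prob_simplex. \<forall>j j'. G j u = G j' u")
    case True
    show ?thesis
    proof (rule disjI1, intro ballI)
      fix p :: "real^'k" assume p: "p \<in> orthant0"
      note s = orthant_unit(1)[OF p] and us = orthant_unit(2)[OF p]
      have D1: "((\<lambda>q. \<Sum>k\<in>UNIV. q$k * Pc N (C k) (q /\<^sub>R vsum q)) has_derivative (\<lambda>h. (\<chi> k. Pc N (C k) (p /\<^sub>R vsum p)) \<bullet> h)) (at p)"
      proof -
        have eqG: "\<And>j j'. (\<Sum>k\<in>UNIV. (p /\<^sub>R vsum p)$k * dPc N (C k) j (p /\<^sub>R vsum p)) = (\<Sum>k\<in>UNIV. (p /\<^sub>R vsum p)$k * dPc N (C k) j' (p /\<^sub>R vsum p))"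
          using True us unfolding G_def by blast
        show ?thesis by (rule conserv_deriv[OF s eqG])
      qed
      have fkeq: "(\<chi> k. fk M D loss N Alg k p) = (\<chi> k. Pc N (C k) (p /\<^sub>R vsum p))"
        by (simp add: fk_def ebarP[OF us])
      show "(Lsame M D loss N Alg has_derivative (\<lambda>h. (\<chi> k. fk M D loss N Alg k p) \<bullet> h)) (at p within orthant0)"
        unfolding fkeq
        by (rule has_derivative_transform_within[OF has_derivative_at_withinI[OF D1] zero_less_one p])
           (simp add: Lsame_eq)
    qed
  next
    case False
    then obtain u j1 j2 where u: "u \<in> prob_simplex" "G j1 u \<noteq> G j2 u" by auto
    define R where "R q = G j1 q - G j2 q" for q
    define U where "U = {p \<in> prob_simplex. (\<exists>k. p$k = 0) \<or> R p = 0}"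
    have vR: "vpoly R" unfolding R_def[abs_def] G_def
      by (intro vpoly_diff vpoly_sum vp_mult vp_var vpoly_dPc) auto
    show ?thesis
    proof (rule disjI2, rule exI[of _ U], intro conjI)
      show "U \<subseteq> prob_simplex" by (auto simp: U_def)
      show "simplex_null U" unfolding U_def
        by (rule simplex_null_vpoly[OF vR u(1)]) (use u(2) in \<open>simp add: R_def\<close>)
      show "\<forall>p\<in>prob_simplex - U. Lstar M D loss N Alg p < Lsame M D loss N Alg p"
      proof
        fix p assume pU: "p \<in> prob_simplex - U"
        then have p: "p \<in> prob_simplex" and pos: "\<And>k. 0 < p $ k" and Rp: "R p \<noteq> 0"
          using simplex_nonneg[of p] by (auto simp: U_def less_le)
        have vs1: "vsum p = 1" using simplex_sum[OF p] by (simp add: vsum_def)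
        have LN_eq: "LN M D loss N Alg p q = (\<Sum>k\<in>UNIV. p$k * Pc N (C k) q)" if "q \<in> prob_simplex" for q
          unfolding LN_def using ebarP[OF that] by simp
        have Ls: "Lsame M D loss N Alg p = (\<Sum>k\<in>UNIV. p$k * Pc N (C k) p)"
          unfolding Lsame_def fk_def using ebarP[OF p] by (simp add: vs1)
        have bdd: "bdd_below ((\<lambda>q. LN M D loss N Alg p q) ` prob_simplex)"
        proof (rule bdd_belowI2)
          fix q :: "real^'k" assume q: "q \<in> prob_simplex"
          have "(\<Sum>k\<in>UNIV. p$k * (- (\<Sum>\<sigma>\<in>Sg N. \<bar>C k \<sigma>\<bar>))) \<le> (\<Sum>k\<in>UNIV. p$k * Pc N (C k) q)"
            by (intro sum_mono mult_left_mono Pc_bound[OF q]) (use pos in \<open>auto intro: less_imp_le\<close>)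
          then show "(\<Sum>k\<in>UNIV. p$k * (- (\<Sum>\<sigma>\<in>Sg N. \<bar>C k \<sigma>\<bar>))) \<le> LN M D loss N Alg p q"
            using LN_eq[OF q] by simp
        qed
        have le: "Lstar M D loss N Alg p \<le> LN M D loss N Alg p q" if "q \<in> prob_simplex" for q
          unfolding Lstar_def by (rule cINF_lower[OF bdd that])
        have "Lstar M D loss N Alg p \<le> Lsame M D loss N Alg p" using le[OF p] LN_eq[OF p] Ls by simp
        moreover have "Lstar M D loss N Alg p \<noteq> Lsame M D loss N Alg p"
        proof
          assume eq: "Lstar M D loss N Alg p = Lsame M D loss N Alg p"
          have "G j1 p = G j2 p" unfolding G_def
          proof (rule lagrange[OF p pos])
            fix q :: "real^'k" assume q: "q \<in> prob_simplex"
            show "(\<Sum>k\<in>UNIV. p$k * Pc N (C k) p) \<le> (\<Sum>k\<in>UNIV. p$k * Pc N (C k) q)"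
              using le[OF q] eq Ls LN_eq[OF q] by simp
          qed
          then show False using Rp by (simp add: R_def)
        qed
        ultimately show "Lstar M D loss N Alg p < Lsame M D loss N Alg p" by simp
      qed
    qed
  qed
qed

end
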